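(* For all integers $n\geq 1$, \[p^{ed}_{od}(n)-p^{ed}_{od}(n-1)=2D_e(n-1)-D_o(n-1),\] and consequently \[p^{ed}_{od}(n)-p^{ed}_{od}(n-1)\equiv D_o(n-1)\pmod 2.\]
   Context: $\mathcal{P}^{ed}_{od}$ is the set of integer partitions such that: - all parts are distinct; - every odd part is smaller than every even part; - at least one odd part appears. In particular the empty partition is not in $\mathcal{P}^{ed}_{od}$. For $n\ge 0$: - $p^{ed}_{od}(n)$ is the number of partitions of $n$ in $\mathcal{P}^{ed}_{od}$, so $p^{ed}_{od}(0)=0$. - $D_e(n)$ is the number of partitions of $n$ into distinct even parts, with any number of parts including zero, so $D_e(0)=1$. - $D_o(n)$ is the number of partitions of $n$ into distinct odd parts, with $D_o(0)=1$. *)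

theory Defs
  imports Main "HOL-Number_Theory.Cong"
begin

(* A partition into distinct parts is represented by its (finite) set of parts,
   all positive; the partitioned integer is the sum of the parts. *)
definition distinct_partitions :: "nat \<Rightarrow> nat set set" where
  "distinct_partitions n = {P. finite P \<and> 0 \<notin> P \<and> \<Sum>P = n}"

definition p_ed_od :: "nat \<Rightarrow> nat" where
  "p_ed_od n = card {P \<in> distinct_partitions n.
      (\<forall>a\<in>P. \<forall>b\<in>P. odd a \<longrightarrow> even b \<longrightarrow> a < b) \<and> (\<exists>a\<in>P. odd a)}"

definition D_e :: "nat \<Rightarrow> nat" where
  "D_e n = card {P \<in> distinct_partitions n. \<forall>a\<in>P. even a}"

definition D_o :: "nat \<Rightarrow> nat" where
  "D_o n = card {P \<in> distinct_partitions n. \<forall>a\<in>P. odd a}"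

end

theory Submission
  imports Defs
begin

definition BB :: "nat set \<Rightarrow> nat \<Rightarrow> nat set set" where
  "BB A m = {P. finite P \<and> 0 \<notin> P \<and> \<Sum>P = m \<and> P \<subseteq> A}"

definition CC :: "nat set \<Rightarrow> nat \<Rightarrow> nat" where
  "CC A m = card (BB A m)"

lemma BB_finite: "finite (BB A m)"
proof -
  have "BB A m \<subseteq> Pow {1..m}"
  proof
    fix P assume "P \<in> BB A m"
    hence P: "finite P" "0 \<notin> P" "\<Sum>P = m" by (auto simp: BB_def)
    have "x \<in> {1..m}" if "x \<in> P" for x
    proof -
      have "x \<le> \<Sum>P" using member_le_sum[of x P id] P that by auto
      moreover have "x \<noteq> 0" using P that by metis
      ultimately show ?thesis using P by auto
    qed
    thus "P \<in> Pow {1..m}" by auto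
  qed
  thus ?thesis by (rule finite_subset) auto
qed

lemma BB_with:
  assumes "a \<notin> A" "0 < a"
  shows "{P \<in> BB (insert a A) m. a \<in> P} = (if a \<le> m then insert a ` BB A (m-a) else {})"
proof (cases "a \<le> m")
  case True
  have "{P \<in> BB (insert a A) m. a \<in> P} = insert a ` BB A (m-a)"
  proof
    show "{P \<in> BB (insert a A) m. a \<in> P} \<subseteq> insert a ` BB A (m-a)"
    proof
      fix P assume "P \<in> {P \<in> BB (insert a A) m. a \<in> P}"
      hence P: "finite P" "0 \<notin> P" "\<Sum>P = m" "P \<subseteq> insert a A" "a \<in> P" by (auto simp: BB_def)
      have "\<Sum>(P - {a}) = m - a" using P sum_diff1_nat[of id P a] by auto
      moreover have "P - {a} \<subseteq> A" using P by auto
      ultimately have "P - {a} \<in> BB A (m-a)" using P by (auto simp: BB_def)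
      moreover have "P = insert a (P - {a})" using P by auto
      ultimately show "P \<in> insert a ` BB A (m-a)" by blast
    qed
    show "insert a ` BB A (m-a) \<subseteq> {P \<in> BB (insert a A) m. a \<in> P}"
    proof
      fix P assume "P \<in> insert a ` BB A (m-a)"
      then obtain Q where Q: "Q \<in> BB A (m-a)" "P = insert a Q" by auto
      hence "a \<notin> Q" using assms by (auto simp: BB_def)
      hence "\<Sum>P = a + \<Sum>Q" using Q by (auto simp: BB_def)
      thus "P \<in> {P \<in> BB (insert a A) m. a \<in> P}" using Q True assms by (auto simp: BB_def)
    qed
  qed
  thus ?thesis using True by simp
next
  case False
  have "{P \<in> BB (insert a A) m. a \<in> P} = {}"
  proof (rule ccontr)
    assume "{P \<in> BB (insert a A) m. a \<in> P} \<noteq> {}"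
    then obtain P where P: "P \<in> BB (insert a A) m" "a \<in> P" by auto
    hence "a \<le> \<Sum>P" using member_le_sum[of a P id] by (auto simp: BB_def)
    thus False using P False by (auto simp: BB_def)
  qed
  thus ?thesis using False by simp
qed

lemma card_with:
  assumes "a \<notin> A" "0 < a"
  shows "card {P \<in> BB (insert a A) m. a \<in> P} = (if a \<le> m then CC A (m-a) else 0)"
proof -
  have "inj_on (insert a) (BB A (m-a))"
  proof (rule inj_onI)
    fix x y assume "x \<in> BB A (m-a)" "y \<in> BB A (m-a)" "insert a x = insert a y"
    moreover have "a \<notin> x" "a \<notin> y" using assms calculation by (auto simp: BB_def)
    ultimately show "x = y" by (metis insert_ident)
  qed
  thus ?thesis using BB_with[OF assms] by (simp add: card_image CC_def)
qed

lemma CC_insert: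
  assumes "a \<notin> A" "0 < a"
  shows "CC (insert a A) m = CC A m + (if a \<le> m then CC A (m-a) else 0)"
proof -
  have eq: "BB (insert a A) m = BB A m \<union> {P \<in> BB (insert a A) m. a \<in> P}"
    by (auto simp: BB_def)
  have "BB A m \<inter> {P \<in> BB (insert a A) m. a \<in> P} = {}" using assms by (auto simp: BB_def)
  hence "card (BB (insert a A) m) = card (BB A m) + card {P \<in> BB (insert a A) m. a \<in> P}"
    by (subst eq, intro card_Un_disjoint) (auto intro: finite_subset[OF _ BB_finite])
  thus ?thesis using card_with[OF assms] by (simp add: CC_def)
qed

definition Ys :: "nat \<Rightarrow> nat set" where
  "Ys k = {a. odd a \<and> a + 3 \<le> 2*k} \<union> {a. even a \<and> 2*k \<le> a}"

definition YY :: "nat \<Rightarrow> nat \<Rightarrow> nat" where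
  "YY k m = CC (Ys k) m"

definition tt :: "nat \<Rightarrow> nat \<Rightarrow> nat" where
  "tt k n = (if 2*k-1 \<le> n then YY k (n-(2*k-1)) else 0)"

lemma Ys_ins: "k \<ge> 1 \<Longrightarrow> insert (2*k-1) (Ys k) = insert (2*k) (Ys (k+1))"
  unfolding Ys_def by (auto; presburger)

lemma Ys_notin1: "k \<ge> 1 \<Longrightarrow> 2*k-1 \<notin> Ys k"
  unfolding Ys_def by auto

lemma Ys_notin2: "2*k \<notin> Ys (k+1)"
  unfolding Ys_def by auto

lemma YY_rec:
  assumes "k \<ge> 1"
  shows "int (tt k m) = int (YY (k+1) m) - int (YY k m) + int (tt (k+1) (m+1))"
proof -
  have e1: "CC (insert (2*k-1) (Ys k)) m = YY k m + (if 2*k-1 \<le> m then YY k (m-(2*k-1)) else 0)"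
    unfolding YY_def by (rule CC_insert) (use assms Ys_notin1 in auto)
  have e2: "CC (insert (2*k) (Ys (k+1))) m = YY (k+1) m + (if 2*k \<le> m then YY (k+1) (m-2*k) else 0)"
    unfolding YY_def by (rule CC_insert) (use assms Ys_notin2 in auto)
  have e3: "CC (insert (2*k-1) (Ys k)) m = CC (insert (2*k) (Ys (k+1))) m"
    using Ys_ins[OF assms] by simp
  have t1: "tt k m = (if 2*k-1 \<le> m then YY k (m-(2*k-1)) else 0)"
    by (simp only: tt_def)
  have t2: "tt (k+1) (m+1) = (if 2*k \<le> m then YY (k+1) (m-2*k) else 0)"
    by (simp add: tt_def)
  have "tt k m + YY k m = tt (k+1) (m+1) + YY (k+1) m" using e1 e2 e3 t1 t2 by linarith
  thus ?thesis by linarith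
qed

lemma tele:
  "(\<Sum>k\<in>{1..N}. int (tt k m)) = int (YY (N+1) m) - int (YY 1 m)
     + (\<Sum>k\<in>{1..N+1}. int (tt k (m+1))) - int (tt 1 (m+1))"
proof (induction N)
  case 0
  then show ?case by simp
next
  case (Suc N)
  have "(\<Sum>k\<in>{1..Suc N}. int (tt k m)) = (\<Sum>k\<in>{1..N}. int (tt k m)) + int (tt (N+1) m)"
    by simp
  also have "int (tt (N+1) m) = int (YY (N+2) m) - int (YY (N+1) m) + int (tt (N+2) (m+1))"
    using YY_rec[of "N+1" m] by simp
  finally show ?case using Suc by simp
qed

lemma De_eq: "D_e m = YY 1 m"
proof -
  have "{P \<in> distinct_partitions m. \<forall>a\<in>P. even a} = BB (Ys 1) m"
    unfolding distinct_partitions_def BB_def Ys_def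
    by (auto; metis dvd_0_right even_Suc less_2_cases_iff linorder_not_less odd_one)
  thus ?thesis by (simp add: D_e_def YY_def CC_def)
qed

lemma elem_le: "P \<in> distinct_partitions m \<Longrightarrow> x \<in> P \<Longrightarrow> x \<le> m"
  unfolding distinct_partitions_def using member_le_sum[of x P id] by auto

lemma Do_eq: "D_o m = YY (m+2) m"
proof -
  have "{P \<in> distinct_partitions m. \<forall>a\<in>P. odd a} = BB (Ys (m+2)) m"
  proof
    show "{P \<in> distinct_partitions m. \<forall>a\<in>P. odd a} \<subseteq> BB (Ys (m+2)) m"
    proof
      fix P assume P: "P \<in> {P \<in> distinct_partitions m. \<forall>a\<in>P. odd a}"
      have "P \<subseteq> Ys (m+2)"
      proof
        fix x assume "x \<in> P"
        thus "x \<in> Ys (m+2)" using P elem_le[of P m x] by (auto simp: Ys_def)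
      qed
      thus "P \<in> BB (Ys (m+2)) m" using P by (auto simp: BB_def distinct_partitions_def)
    qed
    show "BB (Ys (m+2)) m \<subseteq> {P \<in> distinct_partitions m. \<forall>a\<in>P. odd a}"
    proof
      fix P assume P: "P \<in> BB (Ys (m+2)) m"
      hence P1: "P \<in> distinct_partitions m" by (auto simp: BB_def distinct_partitions_def)
      have "odd a" if "a \<in> P" for a
        using P that elem_le[OF P1 that] by (auto simp: BB_def Ys_def)
      thus "P \<in> {P \<in> distinct_partitions m. \<forall>a\<in>P. odd a}" using P1 by auto
    qed
  qed
  thus ?thesis by (simp add: D_o_def YY_def CC_def)
qed

definition PS :: "nat \<Rightarrow> nat set set" where
  "PS n = {P \<in> distinct_partitions n.
      (\<forall>a\<in>P. \<forall>b\<in>P. odd a \<longrightarrow> even b \<longrightarrow> a < b) \<and> (\<exists>a\<in>P. odd a)}"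

lemma PS_UN:
  assumes "N \<ge> n"
  shows "PS n = (\<Union>k\<in>{1..N}. {P \<in> BB (insert (2*k-1) (Ys k)) n. 2*k-1 \<in> P})"
proof
  show "PS n \<subseteq> (\<Union>k\<in>{1..N}. {P \<in> BB (insert (2*k-1) (Ys k)) n. 2*k-1 \<in> P})"
  proof
    fix P assume P: "P \<in> PS n"
    hence P1: "P \<in> distinct_partitions n" and ord: "\<forall>a\<in>P. \<forall>b\<in>P. odd a \<longrightarrow> even b \<longrightarrow> a < b"
      and ex: "\<exists>a\<in>P. odd a" by (auto simp: PS_def)
    have fin: "finite P" using P1 by (auto simp: distinct_partitions_def)
    define Od where "Od = {a\<in>P. odd a}"
    have finO: "finite Od" "Od \<noteq> {}" using fin ex by (auto simp: Od_def)
    define om where "om = Max Od"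
    have oO: "om \<in> Od" using finO by (simp add: om_def)
    have omax: "a \<le> om" if "a \<in> P" "odd a" for a
      using that finO by (auto simp: om_def Od_def)
    have oodd: "odd om" and oP: "om \<in> P" using oO by (auto simp: Od_def)
    define k where "k = (om+1) div 2"
    have ok: "om = 2*k - 1" "k \<ge> 1" using oodd by (auto simp: k_def elim!: oddE)
    have "om \<le> n" using elem_le[OF P1 oP] .
    hence kN: "k \<le> N" using ok assms by linarith
    have sub: "P \<subseteq> insert (2*k-1) (Ys k)"
    proof
      fix x assume x: "x \<in> P"
      show "x \<in> insert (2*k-1) (Ys k)"
      proof (cases "odd x")
        case True
        hence "x \<le> om" using omax x by auto
        thus ?thesis using True oodd ok unfolding Ys_def by (auto; presburger)
      next
        case False
        hence "om < x" using ord oP x oodd by auto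
        thus ?thesis using False ok unfolding Ys_def by auto
      qed
    qed
    have "P \<in> {P \<in> BB (insert (2*k-1) (Ys k)) n. 2*k-1 \<in> P}"
      using sub P1 oP ok by (auto simp: BB_def distinct_partitions_def)
    thus "P \<in> (\<Union>k\<in>{1..N}. {P \<in> BB (insert (2*k-1) (Ys k)) n. 2*k-1 \<in> P})"
      using ok kN by auto
  qed
  show "(\<Union>k\<in>{1..N}. {P \<in> BB (insert (2*k-1) (Ys k)) n. 2*k-1 \<in> P}) \<subseteq> PS n"
  proof
    fix P assume "P \<in> (\<Union>k\<in>{1..N}. {P \<in> BB (insert (2*k-1) (Ys k)) n. 2*k-1 \<in> P})"
    then obtain k where k: "k \<ge> 1" "P \<in> BB (insert (2*k-1) (Ys k)) n" "2*k-1 \<in> P" by auto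
    have "odd (2*k-1)" using k by simp
    moreover have "a < b" if "a \<in> P" "b \<in> P" "odd a" "even b" for a b
    proof -
      have "a \<le> 2*k-1" using that k unfolding BB_def Ys_def by auto
      moreover have "2*k \<le> b" using that k unfolding BB_def Ys_def by auto
      ultimately show ?thesis using k by linarith
    qed
    ultimately have "\<exists>a\<in>P. odd a" "\<forall>a\<in>P. \<forall>b\<in>P. odd a \<longrightarrow> even b \<longrightarrow> a < b"
      using k(3) by blast+
    thus "P \<in> PS n" using k by (auto simp: PS_def BB_def distinct_partitions_def)
  qed
qed

lemma p_sum:
  assumes "N \<ge> n"
  shows "int (p_ed_od n) = (\<Sum>k\<in>{1..N}. int (tt k n))"
proof -
  have "p_ed_od n = card (PS n)" by (simp add: p_ed_od_def PS_def)
  also have "\<dots> = (\<Sum>k\<in>{1..N}. card {P \<in> BB (insert (2*k-1) (Ys k)) n. 2*k-1 \<in> P})"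
    unfolding PS_UN[OF assms]
  proof (rule card_UN_disjoint)
    show "finite {1..N}" by simp
    show "\<forall>i\<in>{1..N}. finite {P \<in> BB (insert (2*i-1) (Ys i)) n. 2*i-1 \<in> P}"
      using BB_finite by auto
    show "\<forall>i\<in>{1..N}. \<forall>j\<in>{1..N}. i \<noteq> j \<longrightarrow>
      {P \<in> BB (insert (2*i-1) (Ys i)) n. 2*i-1 \<in> P} \<inter> {P \<in> BB (insert (2*j-1) (Ys j)) n. 2*j-1 \<in> P} = {}"
    proof (intro ballI impI)
      fix i j assume ij: "i \<in> {1..N}" "j \<in> {1..N}" "i \<noteq> j"
      show "{P \<in> BB (insert (2*i-1) (Ys i)) n. 2*i-1 \<in> P} \<inter> {P \<in> BB (insert (2*j-1) (Ys j)) n. 2*j-1 \<in> P} = {}"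
      proof (rule ccontr)
        assume "\<not> ?thesis"
        then obtain P where P: "P \<subseteq> insert (2*i-1) (Ys i)" "P \<subseteq> insert (2*j-1) (Ys j)"
          "2*i-1 \<in> P" "2*j-1 \<in> P" by (auto simp: BB_def)
        have "2*i-1 \<in> insert (2*j-1) (Ys j)" using P by auto
        hence "2*i-1 = 2*j-1 \<or> 2*i-1+3 \<le> 2*j" using ij unfolding Ys_def by auto
        moreover have "2*j-1 \<in> insert (2*i-1) (Ys i)" using P by auto
        hence "2*j-1 = 2*i-1 \<or> 2*j-1+3 \<le> 2*i" using ij unfolding Ys_def by auto
        ultimately show False using ij by auto
      qed
    qed
  qed
  also have "\<dots> = (\<Sum>k\<in>{1..N}. tt k n)"
  proof (rule sum.cong)
    fix k assume "k \<in> {1..N}"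
    hence k: "k \<ge> 1" by simp
    have "card {P \<in> BB (insert (2*k-1) (Ys k)) n. 2*k-1 \<in> P} = (if 2*k-1 \<le> n then CC (Ys k) (n-(2*k-1)) else 0)"
      by (rule card_with) (use k Ys_notin1 in auto)
    thus "card {P \<in> BB (insert (2*k-1) (Ys k)) n. 2*k-1 \<in> P} = tt k n"
      by (simp only: tt_def YY_def)
  qed simp
  finally show ?thesis by simp
qed

theorem mainTheorem5:
  fixes n :: nat
  assumes "n \<ge> 1"
  shows "int (p_ed_od n) - int (p_ed_od (n - 1)) = 2 * int (D_e (n - 1)) - int (D_o (n - 1))
         \<and> [int (p_ed_od n) - int (p_ed_od (n - 1)) = int (D_o (n - 1))] (mod 2)"
proof -
  obtain m where n: "n = m + 1" using assms by (metis add.commute le_Suc_ex)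
  have t1: "tt 1 (m+1) = YY 1 m" by (simp add: tt_def)
  have A: "int (p_ed_od m) = (\<Sum>k\<in>{1..m+1}. int (tt k m))" by (rule p_sum) simp
  have B: "int (p_ed_od (m+1)) = (\<Sum>k\<in>{1..m+1+1}. int (tt k (m+1)))" by (rule p_sum) simp
  have Do: "D_o m = YY (m+1+1) m" using Do_eq[of m] by (simp add: numeral_2_eq_2)
  have eq: "int (p_ed_od (m+1)) - int (p_ed_od m) = 2 * int (D_e m) - int (D_o m)"
    using tele[where N="m+1" and m=m] A B t1 De_eq[of m] Do by linarith
  moreover have "[2 * int (D_e m) - int (D_o m) = int (D_o m)] (mod 2)"
    by (simp add: cong_iff_dvd_diff)
  ultimately show ?thesis using n by simp
qed

end
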